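(* Let $0<\alpha\le1$, $\delta>0$ and $\bar u\in L^2(\Omega)^d$. For every integer $j\ge0$, the $j$-th Mitlar iterate $u_j$ computed from the data $\bar u$ satisfies $$u_j=D_\alpha\sum_{i=0}^{j}\big(\alpha D_\alpha(I-G)\big)^i\,\bar u .$$
   Context: Let $\Omega\subset\mathbb{R}^n$ be a regular, bounded, polyhedral domain, $d\ge1$, $X=H^1_0(\Omega)^d$, and $(\cdot,\cdot)$ the $L^2(\Omega)^d$ inner product. The differential filter $G:L^2(\Omega)^d\to X$ with filter radius $\delta>0$ is defined by $Gu=\bar u$, where $\bar u\in X$ is the unique solution of $\delta^2(\nabla\bar u,\nabla v)+(\bar u,v)=(u,v)$ for all $v\in X$; it is regarded as a bounded self-adjoint operator on $L^2(\Omega)^d$. For $\alpha\in(0,1]$ let $D_\alpha=[(1-\alpha)G+\alpha I]^{-1}$. Mitlar with data $\bar u$: $u_0$ solves $[(1-\alpha)G+\alpha I]u_0=\bar u$, and for $j\ge1$, $u_j$ solves $[(1-\alpha)G+\alpha I](u_j-u_{j-1})=\bar u-Gu_{j-1}$. *)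

theory Defs
  imports "HOL-Analysis.Analysis"
begin

text \<open>Abstract setting: H is a real Hilbert space (playing the role of L^2(Omega)^d),
and G is the differential filter, recorded through its operator properties:
bounded linear, self-adjoint, and 0 <= (G u, u) <= (u, u).\<close>

definition differential_filter_like :: "('a::{real_inner,complete_space} \<Rightarrow> 'a) \<Rightarrow> bool" where
  "differential_filter_like G \<longleftrightarrow> bounded_linear G
     \<and> (\<forall>u v. inner (G u) v = inner u (G v))
     \<and> (\<forall>u. 0 \<le> inner (G u) u \<and> inner (G u) u \<le> inner u u)"

definition filt_comb :: "real \<Rightarrow> ('a::real_vector \<Rightarrow> 'a) \<Rightarrow> 'a \<Rightarrow> 'a" where
  "filt_comb \<alpha> G = (\<lambda>u. (1 - \<alpha>) *\<^sub>R G u + \<alpha> *\<^sub>R u)"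

definition D_alpha :: "real \<Rightarrow> ('a::real_vector \<Rightarrow> 'a) \<Rightarrow> 'a \<Rightarrow> 'a" where
  "D_alpha \<alpha> G = inv (filt_comb \<alpha> G)"

definition mitlar_iterates :: "real \<Rightarrow> ('a::real_vector \<Rightarrow> 'a) \<Rightarrow> 'a \<Rightarrow> (nat \<Rightarrow> 'a) \<Rightarrow> bool" where
  "mitlar_iterates \<alpha> G ubar u \<longleftrightarrow>
     filt_comb \<alpha> G (u 0) = ubar \<and>
     (\<forall>j\<ge>1. filt_comb \<alpha> G (u j - u (j - 1)) = ubar - G (u (j - 1)))"

end

theory Submission imports Defs begin

lemma F_bl:
  assumes "bounded_linear G" shows "bounded_linear (filt_comb a G)"
  unfolding filt_comb_def using assms
  by (intro bounded_linear_add bounded_linear_scaleR_right bounded_linear_ident) (auto intro: bounded_linear_compose[of "scaleR _"] bounded_linear_scaleR_right)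

lemma F_coercive:
  fixes G :: "'a::{real_inner,complete_space} \<Rightarrow> 'a"
  assumes "differential_filter_like G" "a \<le> 1"
  shows "a * inner x x \<le> inner (filt_comb a G x) x"
proof -
  have "0 \<le> inner (G x) x" using assms unfolding differential_filter_like_def by auto
  then have "0 \<le> (1-a) * inner (G x) x" using assms by simp
  then show ?thesis unfolding filt_comb_def by (simp add: inner_add_left)
qed

lemma bij_F:
  fixes G :: "'a::{real_inner,complete_space} \<Rightarrow> 'a"
  assumes "differential_filter_like G" "0 < a" "a \<le> 1"
  shows "bij (filt_comb a G)"
proof -
  define F where "F = filt_comb a G"
  have bl: "bounded_linear F" using F_bl assms unfolding F_def differential_filter_like_def by blast
  interpret F: bounded_linear F by (rule bl)
  have co: "\<And>x. a * inner x x \<le> inner (F x) x" unfolding F_def using F_coercive assms by blast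
  have "inj F"
  proof (rule injI)
    fix x y assume "F x = F y"
    then have "F (x - y) = 0" by (simp add: F.diff)
    then have "a * inner (x-y) (x-y) \<le> 0" using co[of "x-y"] by simp
    then have "inner (x-y) (x-y) \<le> 0" using assms by (simp add: mult_le_0_iff)
    then show "x = y" by (metis eq_iff_diff_eq_0 inner_gt_zero_iff not_le)
  qed
  moreover have "surj F"
  proof -
    obtain K where K: "K > 0" "\<And>x. norm (F x) \<le> norm x * K" using F.pos_bounded by blast
    define B where "B = max K 1"
    have B: "B \<ge> 1" "\<And>x. norm (F x) \<le> norm x * B"
      unfolding B_def using K by (auto intro: order_trans[OF K(2) mult_left_mono])
    define t where "t = a / B^2"
    have tpos: "t > 0" using B assms unfolding t_def by simp
    have aB: "a^2 / B^2 \<le> 1" using B assms by (simp add: power_le_one divide_le_eq_1 power_mono)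
    define c where "c = sqrt (1 - a^2/B^2)"
    have c: "0 \<le> c" "c < 1" unfolding c_def using aB assms B by auto
    have key: "norm (z - t *\<^sub>R F z) \<le> c * norm z" for z
    proof -
      have "(norm (z - t *\<^sub>R F z))^2 = inner z z - 2 * t * inner (F z) z + t^2 * (norm (F z))^2"
        unfolding power2_norm_eq_inner by (simp add: inner_diff_left inner_diff_right inner_commute algebra_simps power2_eq_square)
      also have "\<dots> \<le> inner z z - 2 * t * (a * inner z z) + t^2 * (norm z * B)^2"
        using co[of z] B(2)[of z] tpos
        by (intro add_mono diff_mono mult_left_mono power_mono) auto
      also have "\<dots> = (1 - a^2/B^2) * (norm z)^2"
        using B unfolding t_def by (simp add: dot_square_norm field_simps power2_eq_square)
      also have "\<dots> = (c * norm z)^2" using aB unfolding c_def by (simp add: power_mult_distrib)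
      finally show ?thesis using c by (simp add: power2_le_iff_abs_le)
    qed
    have "\<exists>x. F x = y" for y
    proof -
      define f where "f x = x - t *\<^sub>R (F x - y)" for x
      have "\<forall>x z. dist (f x) (f z) \<le> c * dist x z"
      proof (intro allI)
        fix x z
        have "f x - f z = (x - z) - t *\<^sub>R F (x - z)"
          unfolding f_def by (simp add: F.diff algebra_simps)
        then show "dist (f x) (f z) \<le> c * dist x z" using key[of "x - z"] by (simp add: dist_norm)
      qed
      then obtain x where "f x = x" using banach_fix_type[OF c] by blast
      then have "t *\<^sub>R (F x - y) = 0" unfolding f_def by simp
      then show ?thesis using tpos by auto
    qed
    then show ?thesis by (metis surjI)
  qed
  ultimately show ?thesis unfolding F_def bij_def by blast
qed

theorem mainTheorem4:
  fixes G :: "'a::{real_inner,complete_space} \<Rightarrow> 'a" and \<alpha> \<delta> :: real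
    and ubar :: 'a and u :: "nat \<Rightarrow> 'a" and j :: nat
  assumes "0 < \<alpha>" "\<alpha> \<le> 1" "\<delta> > 0"
    and "differential_filter_like G"
    and "mitlar_iterates \<alpha> G ubar u"
  shows "u j = D_alpha \<alpha> G
           (\<Sum>i\<le>j. ((\<lambda>v. \<alpha> *\<^sub>R D_alpha \<alpha> G (v - G v)) ^^ i) ubar)"
proof -
  define F where "F = filt_comb \<alpha> G"
  define D where "D = D_alpha \<alpha> G"
  define T where "T = (\<lambda>v. \<alpha> *\<^sub>R D_alpha \<alpha> G (v - G v))"
  have bj: "bij F" unfolding F_def using bij_F assms by blast
  have FD: "F (D y) = y" for y unfolding D_def D_alpha_def F_def[symmetric] using bj by (simp add: bij_is_inj bij_is_surj surj_f_inv_f inv_f_f)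
  have DF: "D (F y) = y" for y unfolding D_def D_alpha_def F_def[symmetric] using bj by (simp add: bij_is_inj bij_is_surj surj_f_inv_f inv_f_f)
  have blG: "bounded_linear G" using assms(4) unfolding differential_filter_like_def by blast
  interpret G: bounded_linear G by (rule blG)
  interpret F: bounded_linear F unfolding F_def by (rule F_bl[OF blG])
  have FG: "F (G x) = G (F x)" for x unfolding F_def filt_comb_def by (simp add: G.add G.scale)
  have DG: "D (G y) = G (D y)" for y
    by (metis DF FD FG)
  have Dlin: "D (a - b) = D a - D b" for a b by (metis DF FD F.diff)
  have Dsc: "D (r *\<^sub>R a) = r *\<^sub>R D a" for r a by (metis DF FD F.scale)
  have Tv: "T v = v - G (D v)" for v
  proof -
    have "\<alpha> *\<^sub>R (v - G v) = F v - G v" unfolding F_def filt_comb_def by (simp add: algebra_simps)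
    then have "T v = D (F v - G v)" unfolding T_def D_def[symmetric] by (metis Dsc)
    then show ?thesis by (simp add: Dlin DF DG)
  qed
  have rec0: "F (u 0) = ubar"
    using assms(5) unfolding mitlar_iterates_def F_def by auto
  have recS: "F (u (Suc k) - u k) = ubar - G (u k)" for k
  proof -
    have h: "\<forall>j\<ge>1. F (u j - u (j - 1)) = ubar - G (u (j - 1))"
      using assms(5) unfolding mitlar_iterates_def F_def by auto
    show ?thesis using h[rule_format, of "Suc k"] by simp
  qed
  have "F (u k) = (\<Sum>i\<le>k. (T ^^ i) ubar) \<and> ubar - G (u k) = (T ^^ Suc k) ubar" for k
  proof (induction k)
    case 0
    have "D (F (u 0)) = D ubar" using rec0 by simp
    then have "u 0 = D ubar" using DF by simp
    then show ?case using rec0 Tv[of ubar] by simp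
  next
    case (Suc k)
    have e: "u (Suc k) - u k = D (ubar - G (u k))" using arg_cong[OF recS[of k], of D] DF by simp
    have 1: "F (u (Suc k)) = F (u k) + (ubar - G (u k))"
      using recS[of k] by (simp add: F.diff algebra_simps)
    have 2: "ubar - G (u (Suc k)) = (ubar - G (u k)) - G (u (Suc k) - u k)" by (simp add: G.diff)
    show ?case using Suc 1 2 e by (simp add: Tv)
  qed
  then have "D (F (u j)) = D (\<Sum>i\<le>j. (T ^^ i) ubar)" by simp
  then have "u j = D (\<Sum>i\<le>j. (T ^^ i) ubar)" using DF by simp
  then show ?thesis unfolding D_def T_def .
qed
end
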